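(* Consider the Bregman proximal augmented Lagrangian method described in the context with $\psi=\frac12\|\cdot\|^2$, $\phi$ Legendre and $0\le\rho_k\le\rho<1$. Let $(x^\star,y^\star)\in\operatorname{zer}T$ with $y^\star\in\operatorname{dom}\phi$ (so $y^\star\in\operatorname{argmin}F^*(0,\cdot)$), and assume that $\{y^{k+1}\}_{k\ge0}$ is bounded (which holds, e.g., if $D_\phi(y^\star,\cdot)$ is coercive). Then $F^*(v^k,y^{k+1})\to F^*(0,y^\star)$, and every limit point $y^\infty$ of $\{y^{k+1}\}_{k\ge0}$ is a dual solution, i.e. $y^\infty\in\operatorname{argmin}F^*(0,\cdot)$.
   Context: Let $f\in\Gamma_0(\mathbb{R}^n)$, $g\in\Gamma_0(\mathbb{R}^m)$ (proper lsc convex), $A\in\mathbb{R}^{m\times n}$, $b\in\mathbb{R}^m$, $\mathcal{A}(x)=Ax-b$. $L(x,y)=f(x)+\langle\mathcal{A}(x),y\rangle-g^*(y)$; KKT operator $T(x,y)=(\partial f(x)+A^\top y)\times(\partial g^*(y)+b-Ax)$ (maximal monotone), $\operatorname{zer}T=T^{-1}(0)$. The dual perturbation function is $F^*(v,y)=\sup_x\{\langle x,v\rangle-L(x,y)\}=f^*(v-A^\top y)+\langle b,y\rangle+g^*(y)$. A function $h\in\Gamma_0$ is Legendre if essentially smooth ($\operatorname{int}\operatorname{dom}h\ne\emptyset$, differentiable there, $\|\nabla h(z^\nu)\|\to\infty$ whenever $\operatorname{int}\operatorname{dom}h\ni z^\nu\to z\in\operatorname{bdry}\operatorname{dom}h$)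 and essentially strictly convex (strictly convex on every convex subset of $\operatorname{dom}\partial h$); $\nabla h^*$ is the inverse of $\nabla h$ on interiors of domains. $D_h(a,c)=h(a)-h(c)-\langle\nabla h(c),a-c\rangle$ for $a\in\operatorname{dom}h$, $c\in\operatorname{int}\operatorname{dom}h$, $+\infty$ otherwise. Let $\psi\in\Gamma_0(\mathbb{R}^n)$, $\phi\in\Gamma_0(\mathbb{R}^m)$ be Legendre, $\Phi(x,y)=\psi(x)+\phi(y)$, and assume $\operatorname{int}\operatorname{dom}\Phi\cap\operatorname{dom}T\ne\emptyset$. Bregman proximal augmented Lagrangian method: given $x^0\in\operatorname{int}\operatorname{dom}\psi$, $y^0\in\operatorname{int}\operatorname{dom}\phi$, step sizes $\sigma_k\ge\sigma>0$ and $\rho_k\in[0,1)$, it generates $s^k\in\operatorname{dom}\psi$, $x^{k+1},y^{k+1},v^k,u^k$ with $(v^k,u^k)\in T(s^k,y^{k+1})$, $x^{k+1}=\nabla\psi^*(\nabla\psi(x^k)-\sigma_kv^k)\in\operatorname{int}\operatorname{dom}\psi$, $y^{k+1}=\nabla\phi^*(\nabla\phi(y^k)-\sigma_ku^k)\in\operatorname{int}\operatorname{dom}\phi$, and $D_\psi(s^k,x^{k+1})\le\rho_k\big(D_\psi(s^k,x^k)+D_\phi(y^{k+1},y^k)\big)$. A function is coercive if it tends to $+\infty$ as the norm of its argument tends to $\infty$. *)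

theory Defs
  imports "HOL-Analysis.Analysis" "HOL-Library.Extended_Real"
begin

text \<open>Functions with values in the extended reals; the value \<open>\<infinity>\<close> encodes points
outside the effective domain.\<close>

definition edom :: "('a \<Rightarrow> ereal) \<Rightarrow> 'a set" where
  "edom f = {x. f x < \<infinity>}"

definition proper_fun :: "('a \<Rightarrow> ereal) \<Rightarrow> bool" where
  "proper_fun f \<longleftrightarrow> (\<forall>x. f x \<noteq> -\<infinity>) \<and> edom f \<noteq> {}"

definition epigraph :: "('a \<Rightarrow> ereal) \<Rightarrow> ('a \<times> real) set" where
  "epigraph f = {(x, r). f x \<le> ereal r}"

definition convex_efun :: "('a::real_vector \<Rightarrow> ereal) \<Rightarrow> bool" where
  "convex_efun f \<longleftrightarrow> convex (epigraph f)"

definition lsc_efun :: "('a::topological_space \<Rightarrow> ereal) \<Rightarrow> bool" where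
  "lsc_efun f \<longleftrightarrow> closed (epigraph f)"

definition Gamma0 :: "('a::euclidean_space \<Rightarrow> ereal) \<Rightarrow> bool" where
  "Gamma0 f \<longleftrightarrow> proper_fun f \<and> convex_efun f \<and> lsc_efun f"

definition fconj :: "('a::real_inner \<Rightarrow> ereal) \<Rightarrow> 'a \<Rightarrow> ereal" where
  "fconj f v = (SUP x. ereal (inner x v) - f x)"

definition subdiff :: "('a::real_inner \<Rightarrow> ereal) \<Rightarrow> 'a \<Rightarrow> 'a set" where
  "subdiff f x = {w. f x < \<infinity> \<and> (\<forall>z. f x + ereal (inner w (z - x)) \<le> f z)}"

definition dom_subdiff :: "('a::real_inner \<Rightarrow> ereal) \<Rightarrow> 'a set" where
  "dom_subdiff f = {x. subdiff f x \<noteq> {}}"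

text \<open>Gradient of \<open>h\<close> at a point (meaningful where \<open>h\<close> is finite and differentiable).\<close>
definition egrad :: "('a::real_inner \<Rightarrow> ereal) \<Rightarrow> 'a \<Rightarrow> 'a" where
  "egrad h z = (SOME D. GDERIV (\<lambda>w. real_of_ereal (h w)) z :> D)"

definition essentially_smooth :: "('a::euclidean_space \<Rightarrow> ereal) \<Rightarrow> bool" where
  "essentially_smooth h \<longleftrightarrow>
     interior (edom h) \<noteq> {} \<and>
     (\<forall>z\<in>interior (edom h). (\<lambda>w. real_of_ereal (h w)) differentiable (at z)) \<and>
     (\<forall>zs z. (\<forall>k. zs k \<in> interior (edom h)) \<longrightarrow> zs \<longlonglongrightarrow> z \<longrightarrow> z \<in> frontier (edom h) \<longrightarrow>
        filterlim (\<lambda>k. norm (egrad h (zs k))) at_top sequentially)"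

definition strictly_convex_on_efun :: "'a::real_vector set \<Rightarrow> ('a \<Rightarrow> ereal) \<Rightarrow> bool" where
  "strictly_convex_on_efun C h \<longleftrightarrow>
     (\<forall>x\<in>C. \<forall>y\<in>C. \<forall>t::real. x \<noteq> y \<longrightarrow> 0 < t \<longrightarrow> t < 1 \<longrightarrow>
        h ((1 - t) *\<^sub>R x + t *\<^sub>R y) < ereal (1 - t) * h x + ereal t * h y)"

definition essentially_strictly_convex :: "('a::euclidean_space \<Rightarrow> ereal) \<Rightarrow> bool" where
  "essentially_strictly_convex h \<longleftrightarrow>
     (\<forall>C. convex C \<longrightarrow> C \<subseteq> dom_subdiff h \<longrightarrow> strictly_convex_on_efun C h)"

definition Legendre :: "('a::euclidean_space \<Rightarrow> ereal) \<Rightarrow> bool" where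
  "Legendre h \<longleftrightarrow> Gamma0 h \<and> essentially_smooth h \<and> essentially_strictly_convex h"

definition Bregman :: "('a::real_inner \<Rightarrow> ereal) \<Rightarrow> 'a \<Rightarrow> 'a \<Rightarrow> ereal" where
  "Bregman h a c =
     (if a \<in> edom h \<and> c \<in> interior (edom h)
      then h a - h c - ereal (inner (egrad h c) (a - c)) else \<infinity>)"

definition KKT :: "(real^'n \<Rightarrow> ereal) \<Rightarrow> (real^'m \<Rightarrow> ereal) \<Rightarrow> real^'n^'m \<Rightarrow> real^'m
    \<Rightarrow> real^'n \<Rightarrow> real^'m \<Rightarrow> ((real^'n) \<times> (real^'m)) set" where
  "KKT f g A b x y =
     {(v, u). \<exists>p\<in>subdiff f x. \<exists>q\<in>subdiff (fconj g) y.
        v = p + transpose A *v y \<and> u = q + b - A *v x}"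

definition zerT :: "(real^'n \<Rightarrow> ereal) \<Rightarrow> (real^'m \<Rightarrow> ereal) \<Rightarrow> real^'n^'m \<Rightarrow> real^'m
    \<Rightarrow> ((real^'n) \<times> (real^'m)) set" where
  "zerT f g A b = {(x, y). (0, 0) \<in> KKT f g A b x y}"

definition domT :: "(real^'n \<Rightarrow> ereal) \<Rightarrow> (real^'m \<Rightarrow> ereal) \<Rightarrow> real^'n^'m \<Rightarrow> real^'m
    \<Rightarrow> ((real^'n) \<times> (real^'m)) set" where
  "domT f g A b = {(x, y). KKT f g A b x y \<noteq> {}}"

definition Fstar :: "(real^'n \<Rightarrow> ereal) \<Rightarrow> (real^'m \<Rightarrow> ereal) \<Rightarrow> real^'n^'m \<Rightarrow> real^'m
    \<Rightarrow> real^'n \<Rightarrow> real^'m \<Rightarrow> ereal" where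
  "Fstar f g A b v y = fconj f (v - transpose A *v y) + ereal (inner b y) + fconj g y"

definition argmin_set :: "('a \<Rightarrow> ereal) \<Rightarrow> 'a set" where
  "argmin_set F = {y. \<forall>z. F y \<le> F z}"

definition sepsum :: "('a \<Rightarrow> ereal) \<Rightarrow> ('b \<Rightarrow> ereal) \<Rightarrow> 'a \<times> 'b \<Rightarrow> ereal" where
  "sepsum \<psi> \<phi> p = \<psi> (fst p) + \<phi> (snd p)"

definition half_sq_norm :: "'a::real_normed_vector \<Rightarrow> ereal" where
  "half_sq_norm x = ereal ((1/2) * (norm x)\<^sup>2)"

end

theory Submission
  imports Defs
begin

lemma proper_ne_minf: "proper_fun h \<Longrightarrow> h x \<noteq> -\<infinity>"
  by (simp add: proper_fun_def)

lemma proper_ex_fin: assumes "proper_fun h" obtains x r where "h x = ereal r"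
proof -
  from assms obtain x where "h x < \<infinity>" unfolding proper_fun_def edom_def by auto
  moreover have "h x \<noteq> -\<infinity>" by (rule proper_ne_minf[OF assms])
  ultimately show ?thesis using that by (cases "h x") auto
qed

lemma conj_ge: "ereal (inner x z) - h x \<le> fconj h z"
  unfolding fconj_def by (rule SUP_upper) simp

lemma conj_ne_minf: assumes "proper_fun h" shows "fconj h z \<noteq> -\<infinity>"
proof -
  obtain x r where "h x = ereal r" using proper_ex_fin[OF assms] by blast
  then have "ereal (inner x z - r) \<le> fconj h z" using conj_ge[of x z h] by simp
  then show ?thesis by auto
qed

lemma conj_le_iff: "fconj h z \<le> c \<longleftrightarrow> (\<forall>x. ereal (inner x z) - h x \<le> c)"
  unfolding fconj_def by (simp add: SUP_le_iff)

lemma epi_convex: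
  assumes "convex_efun h" "h a \<le> ereal ra" "h b \<le> ereal rb" "0 \<le> t" "t \<le> 1"
  shows "h ((1 - t) *\<^sub>R a + t *\<^sub>R b) \<le> ereal ((1 - t) * ra + t * rb)"
proof -
  have "(a, ra) \<in> epigraph h" "(b, rb) \<in> epigraph h" using assms by (auto simp: epigraph_def)
  then have "(1 - t) *\<^sub>R (a, ra) + t *\<^sub>R (b, rb) \<in> epigraph h"
    using assms convexD[of "epigraph h"] unfolding convex_efun_def by auto
  then show ?thesis by (simp add: epigraph_def)
qed

lemma epi_closed:
  fixes h :: "'a::metric_space \<Rightarrow> ereal"
  assumes "lsc_efun h" "\<And>j. h (xs j) \<le> ereal (cs j)" "xs \<longlonglongrightarrow> w" "cs \<longlonglongrightarrow> c"
  shows "h w \<le> ereal c"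
proof -
  have "\<forall>j. (xs j, cs j) \<in> epigraph h" using assms(2) by (simp add: epigraph_def)
  moreover have "(\<lambda>j. (xs j, cs j)) \<longlonglongrightarrow> (w, c)" using assms(3,4) by (rule tendsto_Pair)
  ultimately have "(w, c) \<in> epigraph h"
    using closed_sequential_limits[THEN iffD1, rule_format, of "epigraph h" "\<lambda>j. (xs j, cs j)" "(w,c)"]
      assms(1) unfolding lsc_efun_def by blast
  then show ?thesis by (simp add: epigraph_def)
qed

lemma conj_convex:
  assumes "proper_fun h" "fconj h a = ereal A" "fconj h b = ereal B" "0 \<le> t" "t \<le> 1"
  shows "fconj h ((1 - t) *\<^sub>R a + t *\<^sub>R b) \<le> ereal ((1 - t) * A + t * B)"
  unfolding conj_le_iff
proof
  fix x
  show "ereal (inner x ((1 - t) *\<^sub>R a + t *\<^sub>R b)) - h x \<le> ereal ((1 - t) * A + t * B)"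
  proof (cases "h x")
    case (real r)
    have "ereal (inner x a) - h x \<le> ereal A" "ereal (inner x b) - h x \<le> ereal B"
      using conj_ge[of x _ h] assms by metis+
    then have "inner x a - r \<le> A" "inner x b - r \<le> B" using real by auto
    then have "(1-t) * (inner x a - r) + t * (inner x b - r) \<le> (1 - t) * A + t * B"
      using assms(4,5) by (intro add_mono mult_left_mono) auto
    then show ?thesis using real by (simp add: inner_add_right algebra_simps)
  qed (use proper_ne_minf[OF assms(1), of x] in auto)
qed

lemma Gamma0_proper: "Gamma0 h \<Longrightarrow> proper_fun h" by (simp add: Gamma0_def)
lemma Gamma0_convex: "Gamma0 h \<Longrightarrow> convex_efun h" by (simp add: Gamma0_def)
lemma Gamma0_lsc: "Gamma0 h \<Longrightarrow> lsc_efun h" by (simp add: Gamma0_def)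

lemma conj_fin:
  assumes "proper_fun h" "w \<in> edom (fconj h)"
  shows "fconj h w = ereal (real_of_ereal (fconj h w))"
  using assms conj_ne_minf[OF assms(1), of w] unfolding edom_def by (cases "fconj h w") auto

lemma conj_edom_convex:
  assumes "proper_fun h" shows "convex (edom (fconj h))"
  unfolding convex_alt
proof clarify
  fix a b and t :: real assume a: "a \<in> edom (fconj h)" and b: "b \<in> edom (fconj h)" and t: "0 \<le> t" "t \<le> 1"
  have "fconj h ((1 - t) *\<^sub>R a + t *\<^sub>R b) \<le> ereal ((1 - t) * real_of_ereal (fconj h a) + t * real_of_ereal (fconj h b))"
    using conj_convex[OF assms conj_fin[OF assms a] conj_fin[OF assms b] t] .
  then show "(1 - t) *\<^sub>R a + t *\<^sub>R b \<in> edom (fconj h)" unfolding edom_def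
    using le_less_trans by fastforce
qed

lemma conj_convex_on:
  assumes "proper_fun h"
  shows "convex_on (interior (edom (fconj h))) (\<lambda>w. real_of_ereal (fconj h w))"
proof (rule convex_onI)
  show "convex (interior (edom (fconj h)))" using conj_edom_convex[OF assms] by simp
next
  fix t :: real and a b assume t: "0 < t" "t < 1" and a: "a \<in> interior (edom (fconj h))"
    and b: "b \<in> interior (edom (fconj h))"
  have a': "a \<in> edom (fconj h)" and b': "b \<in> edom (fconj h)" using a b interior_subset by auto
  have c: "(1 - t) *\<^sub>R a + t *\<^sub>R b \<in> edom (fconj h)"
    using conj_edom_convex[OF assms] a' b' t convexD[of "edom (fconj h)" a b "1-t" t] by auto
  have "fconj h ((1 - t) *\<^sub>R a + t *\<^sub>R b) \<le> ereal ((1 - t) * real_of_ereal (fconj h a) + t * real_of_ereal (fconj h b))"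
    using conj_convex[OF assms conj_fin[OF assms a'] conj_fin[OF assms b']] t by auto
  then show "real_of_ereal (fconj h ((1 - t) *\<^sub>R a + t *\<^sub>R b)) \<le> (1 - t) * real_of_ereal (fconj h a) + t * real_of_ereal (fconj h b)"
    using conj_fin[OF assms c] by (metis ereal_less_eq(3))
qed

lemma conj_cont:
  fixes h :: "'a::euclidean_space \<Rightarrow> ereal"
  assumes "proper_fun h"
  shows "continuous_on (interior (edom (fconj h))) (\<lambda>w. real_of_ereal (fconj h w))"
  by (rule convex_on_continuous[OF _ conj_convex_on[OF assms]]) simp

lemma conj_local_bound:
  fixes h :: "'a::euclidean_space \<Rightarrow> ereal"
  assumes "proper_fun h" "z \<in> interior (edom (fconj h))"
  obtains d B where "d > 0" "cball z (2*d) \<subseteq> interior (edom (fconj h))"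
    "\<And>y. y \<in> cball z (2*d) \<Longrightarrow> \<bar>real_of_ereal (fconj h y)\<bar> \<le> B"
proof -
  obtain e where e: "e > 0" "cball z e \<subseteq> interior (edom (fconj h))"
    using assms(2) open_contains_cball[of "interior (edom (fconj h))"] by auto
  define d where "d = e / 2"
  have d: "d > 0" "cball z (2*d) \<subseteq> interior (edom (fconj h))" using e by (auto simp: d_def)
  have "compact ((\<lambda>w. real_of_ereal (fconj h w)) ` cball z (2*d))"
    by (rule compact_continuous_image[OF continuous_on_subset[OF conj_cont[OF assms(1)] d(2)]]) simp
  then obtain B where "\<forall>y\<in>(\<lambda>w. real_of_ereal (fconj h w)) ` cball z (2*d). norm y \<le> B"
    using compact_imp_bounded bounded_iff by metis
  then show ?thesis using that[OF d] by (simp only: ball_simps image_iff real_norm_def) blast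
qed


definition Hr :: "('a::real_inner \<Rightarrow> ereal) \<Rightarrow> 'a \<Rightarrow> real" where
  "Hr h y = real_of_ereal (fconj h y)"

lemma maxim_subgrad:
  assumes P: "proper_fun h" and c: "fconj h z' = ereal c" and v: "fconj h z' \<le> ereal (inner w z') - h w"
  shows "z' \<in> subdiff h w" "h w = ereal (inner w z' - c)"
proof -
  have "ereal (inner w z') - h w \<le> fconj h z'" by (rule conj_ge)
  then have eq: "ereal (inner w z') - h w = ereal c" using v c by auto
  then show hw: "h w = ereal (inner w z' - c)"
    using proper_ne_minf[OF P, of w] by (cases "h w") auto
  show "z' \<in> subdiff h w" unfolding subdiff_def
  proof (clarify, intro conjI allI)
    show "h w < \<infinity>" using hw by simp
    fix x
    show "h w + ereal (inner z' (x - w)) \<le> h x"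
    proof (cases "h x")
      case (real r)
      have "ereal (inner x z') - h x \<le> fconj h z'" by (rule conj_ge)
      then have "inner x z' - r \<le> c" using real c by simp
      then show ?thesis using hw real by (simp add: inner_diff_right inner_commute)
    qed (use proper_ne_minf[OF P, of x] in auto)
  qed
qed

lemma maxim_unique:
  assumes G: "Gamma0 h" and SC: "essentially_strictly_convex h" and c: "fconj h z' = ereal c"
    and v1: "fconj h z' \<le> ereal (inner w1 z') - h w1"
    and v2: "fconj h z' \<le> ereal (inner w2 z') - h w2"
  shows "w1 = w2"
proof (rule ccontr)
  assume ne: "w1 \<noteq> w2"
  have P: "proper_fun h" using G by (simp add: Gamma0_def)
  have CV: "convex_efun h" using G by (simp add: Gamma0_def)
  define r1 where "r1 = inner w1 z' - c"
  define r2 where "r2 = inner w2 z' - c"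
  have h1: "h w1 = ereal r1" using maxim_subgrad(2)[OF P c v1] r1_def by simp
  have h2: "h w2 = ereal r2" using maxim_subgrad(2)[OF P c v2] r2_def by simp
  have sub: "closed_segment w1 w2 \<subseteq> dom_subdiff h"
  proof
    fix p assume "p \<in> closed_segment w1 w2"
    then obtain t where t: "0 \<le> t" "t \<le> 1" "p = (1 - t) *\<^sub>R w1 + t *\<^sub>R w2"
      unfolding closed_segment_def by auto
    have hp: "h p \<le> ereal ((1 - t) * r1 + t * r2)"
      using epi_convex[OF CV, of w1 r1 w2 r2 t] h1 h2 t by simp
    have "inner p z' - ((1 - t) * r1 + t * r2) = c"
      unfolding t(3) by (simp add: r1_def r2_def inner_add_left inner_diff_left algebra_simps)
    then have "fconj h z' \<le> ereal (inner p z') - h p" using hp c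
      by (cases "h p") (auto simp: proper_ne_minf[OF P])
    then have "z' \<in> subdiff h p" using maxim_subgrad(1)[OF P c] by blast
    then show "p \<in> dom_subdiff h" by (auto simp: dom_subdiff_def)
  qed
  have "strictly_convex_on_efun (closed_segment w1 w2) h"
    using SC sub unfolding essentially_strictly_convex_def by simp
  then have sc: "\<forall>x\<in>closed_segment w1 w2. \<forall>y\<in>closed_segment w1 w2. \<forall>t::real. x \<noteq> y \<longrightarrow> 0 < t \<longrightarrow> t < 1 \<longrightarrow>
        h ((1 - t) *\<^sub>R x + t *\<^sub>R y) < ereal (1 - t) * h x + ereal t * h y"
    unfolding strictly_convex_on_efun_def .
  have "h ((1 - 1/2) *\<^sub>R w1 + (1/2) *\<^sub>R w2) < ereal (1 - 1/2) * h w1 + ereal (1/2) * h w2"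
    using sc[rule_format, of w1 w2 "1/2"] ne by simp
  then have lt: "h ((1/2) *\<^sub>R w1 + (1/2) *\<^sub>R w2) < ereal (r1/2 + r2/2)" using h1 h2 by simp
  define m where "m = (1/2) *\<^sub>R w1 + (1/2) *\<^sub>R w2"
  have "ereal (inner m z') - h m \<le> fconj h z'" by (rule conj_ge)
  moreover have "inner m z' - (r1/2 + r2/2) = c" by (simp add: m_def r1_def r2_def inner_add_left field_simps)
  ultimately show False using lt c unfolding m_def[symmetric]
    by (cases "h m") (auto simp: proper_ne_minf[OF P])
qed

context
  fixes h :: "'a::euclidean_space \<Rightarrow> ereal" and z :: 'a and d B :: real
  assumes G: "Gamma0 h" and dpos: "d > 0" and sub: "cball z (2*d) \<subseteq> interior (edom (fconj h))"
    and bnd: "\<And>y. y \<in> cball z (2*d) \<Longrightarrow> \<bar>Hr h y\<bar> \<le> B"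
begin

lemma P: "proper_fun h" using G by (simp add: Gamma0_def)

lemma finU: "y \<in> cball z (2*d) \<Longrightarrow> fconj h y = ereal (Hr h y)"
  using conj_fin[OF P, of y] sub interior_subset unfolding Hr_def by blast

lemma cb_sub: "y \<in> cball z d \<Longrightarrow> y \<in> cball z (2*d)" using dpos by auto

lemma Bnn: "0 \<le> B" using bnd[of z] dpos by auto

lemma max_bound:
  assumes z': "z' \<in> cball z d" and v: "ereal (Hr h z' - 1) \<le> ereal (inner x z') - h x"
  shows "norm x \<le> (2*B+1)/d"
proof (cases "x = 0")
  case True then show ?thesis using Bnn dpos by simp
next
  case False
  then have nx: "norm x > 0" by simp
  define p where "p = z' + (d / norm x) *\<^sub>R x"
  have "dist z p \<le> dist z z' + dist z' p" by (rule dist_triangle)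
  also have "dist z' p = d" using nx dpos by (simp add: p_def dist_norm)
  finally have p: "p \<in> cball z (2*d)" using z' by simp
  obtain r where r: "h x = ereal r" using v proper_ne_minf[OF P, of x] by (cases "h x") auto
  have 1: "Hr h z' - 1 \<le> inner x z' - r" using v r by simp
  have "ereal (inner x p) - h x \<le> fconj h p" by (rule conj_ge)
  then have 2: "inner x p - r \<le> Hr h p" using r finU[OF p] by simp
  have "inner x p = inner x z' + d * norm x" using nx
    by (simp add: p_def inner_add_right power2_norm_eq_inner[symmetric] power2_eq_square)
  then have "d * norm x \<le> Hr h p - Hr h z' + 1" using 1 2 by simp
  also have "\<dots> \<le> 2*B + 1" using bnd[OF p] bnd[OF cb_sub[OF z']] by simp
  finally show ?thesis using dpos by (simp add: pos_le_divide_eq mult.commute)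
qed

lemma max_closed:
  assumes zs: "\<And>j. zs j \<in> cball z d" and zl: "zs \<longlonglongrightarrow> z'" and z': "z' \<in> cball z d"
    and xl: "xs \<longlonglongrightarrow> w" and el: "es \<longlonglongrightarrow> 0"
    and v: "\<And>j. ereal (Hr h (zs j) - es j) \<le> ereal (inner (xs j) (zs j)) - h (xs j)"
  shows "fconj h z' \<le> ereal (inner w z') - h w"
proof -
  have hx: "h (xs j) \<le> ereal (inner (xs j) (zs j) - Hr h (zs j) + es j)" for j
    using v[of j] proper_ne_minf[OF P, of "xs j"] by (cases "h (xs j)") auto
  have U: "zs j \<in> interior (edom (fconj h))" for j using zs[of j] sub cb_sub by blast
  have Uz: "z' \<in> interior (edom (fconj h))" using z' sub cb_sub by blast
  have "(\<lambda>j. Hr h (zs j)) \<longlonglongrightarrow> Hr h z'"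
    unfolding Hr_def by (rule continuous_on_tendsto_compose[OF conj_cont[OF P] zl Uz]) (simp add: U)
  then have "(\<lambda>j. inner (xs j) (zs j) - Hr h (zs j) + es j) \<longlonglongrightarrow> inner w z' - Hr h z' + 0"
    by (intro tendsto_intros xl zl el)
  then have "h w \<le> ereal (inner w z' - Hr h z')"
    using epi_closed[OF Gamma0_lsc[OF G] hx xl] by simp
  then show ?thesis using finU[OF cb_sub[OF z']] proper_ne_minf[OF P, of w] by (cases "h w") auto
qed

lemma max_exists:
  assumes z': "z' \<in> cball z d"
  shows "\<exists>w. fconj h z' \<le> ereal (inner w z') - h w"
proof -
  have "\<exists>x. ereal (Hr h z' - 1 / (Suc j)) < ereal (inner x z') - h x" for j :: nat
  proof -
    have "ereal (Hr h z' - 1 / (Suc j)) < fconj h z'" using finU[OF cb_sub[OF z']] by simp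
    then show ?thesis unfolding fconj_def less_SUP_iff by auto
  qed
  then obtain xs where xs: "\<And>j. ereal (Hr h z' - 1 / (Suc j)) < ereal (inner (xs j) z') - h (xs j)"
    by metis
  have "norm (xs j) \<le> (2*B+1)/d" for j
  proof (rule max_bound[OF z'])
    have "Hr h z' - 1 \<le> Hr h z' - 1 / (Suc j)" by (simp add: divide_le_eq)
    then show "ereal (Hr h z' - 1) \<le> ereal (inner (xs j) z') - h (xs j)"
      using xs[of j] by (meson ereal_less_eq(3) less_imp_le order_trans)
  qed
  then have "bounded (range xs)" unfolding bounded_iff by auto
  then obtain w r where r: "strict_mono r" "(xs \<circ> r) \<longlonglongrightarrow> w"
    using bounded_imp_convergent_subsequence by blast
  have el: "(\<lambda>j. 1 / real (Suc (r j))) \<longlonglongrightarrow> 0"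
  proof -
    have "(\<lambda>j. 1 / real (Suc j)) \<longlonglongrightarrow> 0" using LIMSEQ_Suc[OF lim_inverse_n'] by simp
    from LIMSEQ_subseq_LIMSEQ[OF this r(1)] show ?thesis by (simp add: o_def)
  qed
  have "fconj h z' \<le> ereal (inner w z') - h w"
    by (rule max_closed[of "\<lambda>_. z'" z' "xs \<circ> r" w "\<lambda>j. 1 / real (Suc (r j))"])
       (use z' r el xs less_imp_le in auto)
  then show ?thesis by blast
qed

lemma max_cont:
  assumes SC: "essentially_strictly_convex h" and w0: "fconj h z \<le> ereal (inner w0 z) - h w0"
    and e: "e > 0"
  shows "\<exists>d'>0. \<forall>z' w'. norm (z' - z) < d' \<longrightarrow> fconj h z' \<le> ereal (inner w' z') - h w' \<longrightarrow> norm (w' - w0) < e"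
proof (rule ccontr)
  assume neg: "\<not> ?thesis"
  have neg': "\<exists>z' w'. norm (z' - z) < d' \<and> fconj h z' \<le> ereal (inner w' z') - h w' \<and> \<not> norm (w' - w0) < e"
    if "d' > 0" for d'
    using neg that by blast
  have "\<exists>z' w'. norm (z' - z) < min d (1 / Suc n) \<and> fconj h z' \<le> ereal (inner w' z') - h w' \<and> \<not> norm (w' - w0) < e" for n :: nat
    by (rule neg') (use dpos in simp)
  then have "\<exists>zw. norm (fst zw - z) < min d (1 / Suc n) \<and> fconj h (fst zw) \<le> ereal (inner (snd zw) (fst zw)) - h (snd zw) \<and> \<not> norm (snd zw - w0) < e" for n :: nat
    by fastforce
  then obtain ZW where ZW: "\<And>n. norm (fst (ZW n) - z) < min d (1 / Suc n) \<and> fconj h (fst (ZW n)) \<le> ereal (inner (snd (ZW n)) (fst (ZW n))) - h (snd (ZW n)) \<and> \<not> norm (snd (ZW n) - w0) < e"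
    by metis
  define zs where "zs n = fst (ZW n)" for n
  define ws where "ws n = snd (ZW n)" for n
  have zw: "\<And>n. norm (zs n - z) < min d (1 / Suc n)"
     "\<And>n. fconj h (zs n) \<le> ereal (inner (ws n) (zs n)) - h (ws n)" "\<And>n. \<not> norm (ws n - w0) < e"
    using ZW unfolding zs_def ws_def by auto
  have zc: "zs n \<in> cball z d" for n using zw(1)[of n] by (simp add: dist_norm norm_minus_commute)
  have vz: "ereal (Hr h (zs n) - 0) \<le> ereal (inner (ws n) (zs n)) - h (ws n)" for n
    using zw(2)[of n] finU[OF cb_sub[OF zc[of n]]] by simp
  have zl: "zs \<longlonglongrightarrow> z"
  proof -
    have "(\<lambda>n. 1 / real (Suc n)) \<longlonglongrightarrow> 0" using LIMSEQ_Suc[OF lim_inverse_n'] by simp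
    moreover have "norm (zs n - z) \<le> 1 / real (Suc n)" for n using zw(1)[of n] by simp
    ultimately have "(\<lambda>n. zs n - z) \<longlonglongrightarrow> 0"
      by (intro Lim_null_comparison[of "\<lambda>n. zs n - z" "\<lambda>n. 1 / real (Suc n)"] always_eventually) auto
    then show ?thesis by (rule LIM_zero_cancel)
  qed
  have "norm (ws n) \<le> (2*B+1)/d" for n
  proof (rule max_bound[OF zc[of n]])
    show "ereal (Hr h (zs n) - 1) \<le> ereal (inner (ws n) (zs n)) - h (ws n)"
      using vz[of n] by (rule order_trans[rotated]) simp
  qed
  then have "bounded (range ws)" unfolding bounded_iff by auto
  then obtain l r where r: "strict_mono r" "(ws \<circ> r) \<longlonglongrightarrow> l"
    using bounded_imp_convergent_subsequence by blast
  have zrl: "(zs \<circ> r) \<longlonglongrightarrow> z" using LIMSEQ_subseq_LIMSEQ[OF zl r(1)] .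
  have zin: "z \<in> cball z d" using dpos by simp
  have "fconj h z \<le> ereal (inner l z) - h l"
  proof (rule max_closed[of "zs \<circ> r" z "ws \<circ> r" l "\<lambda>_. 0", OF _ zrl zin r(2)])
    show "\<And>j. (zs \<circ> r) j \<in> cball z d" using zc by simp
    show "\<And>j. ereal (Hr h ((zs \<circ> r) j) - 0) \<le> ereal (inner ((ws \<circ> r) j) ((zs \<circ> r) j)) - h ((ws \<circ> r) j)"
      using vz by simp
  qed simp
  moreover have "fconj h z = ereal (Hr h z)" using finU[OF cb_sub[OF zin]] .
  ultimately have "l = w0" using maxim_unique[OF G SC _ _ w0] by blast
  then obtain n where "norm ((ws \<circ> r) n - w0) < e" using r(2) e unfolding LIMSEQ_iff by blast
  then show False using zw(3) by simp
qed

lemma max_deriv: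
  assumes SC: "essentially_strictly_convex h" and w0: "fconj h z \<le> ereal (inner w0 z) - h w0"
  shows "GDERIV (\<lambda>w. real_of_ereal (fconj h w)) z :> w0"
  unfolding gderiv_def has_derivative_at_alt
proof (intro conjI allI impI bounded_linear_inner_left)
  fix e :: real assume e: "e > 0"
  obtain d' where d': "d' > 0" "\<And>z' w'. norm (z' - z) < d' \<Longrightarrow> fconj h z' \<le> ereal (inner w' z') - h w' \<Longrightarrow> norm (w' - w0) < e"
    using max_cont[OF SC w0 e] by blast
  have hz: "fconj h z = ereal (Hr h z)" using finU[of z] dpos by simp
  have hw0: "h w0 = ereal (inner w0 z - Hr h z)" using maxim_subgrad(2)[OF P hz w0] .
  show "\<exists>d>0. \<forall>y. norm (y - z) < d \<longrightarrow>
      norm (real_of_ereal (fconj h y) - real_of_ereal (fconj h z) - inner (y - z) w0) \<le> e * norm (y - z)"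
  proof (intro exI[of _ "min d d'"] conjI allI impI)
    show "min d d' > 0" using dpos d' by simp
    fix y assume y: "norm (y - z) < min d d'"
    then have yc: "y \<in> cball z d" by (simp add: dist_norm norm_minus_commute)
    have hy: "fconj h y = ereal (Hr h y)" using finU[OF cb_sub[OF yc]] .
    obtain w' where w': "fconj h y \<le> ereal (inner w' y) - h w'" using max_exists[OF yc] by blast
    have hw': "h w' = ereal (inner w' y - Hr h y)" using maxim_subgrad(2)[OF P hy w'] .
    have nw: "norm (w' - w0) < e" using d'(2)[OF _ w'] y by simp
    have "ereal (inner w0 y) - h w0 \<le> fconj h y" by (rule conj_ge)
    then have lo: "inner w0 y - (inner w0 z - Hr h z) \<le> Hr h y" using hw0 hy by simp
    have "ereal (inner w' z) - h w' \<le> fconj h z" by (rule conj_ge)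
    then have up: "inner w' z - (inner w' y - Hr h y) \<le> Hr h z" using hw' hz by simp
    have A: "0 \<le> Hr h y - Hr h z - inner (y - z) w0" using lo by (simp add: inner_diff_left inner_diff_right inner_commute)
    have "Hr h y - Hr h z - inner (y - z) w0 \<le> inner (y - z) (w' - w0)"
      using up by (simp add: inner_diff_left inner_diff_right inner_commute)
    also have "\<dots> \<le> norm (y - z) * norm (w' - w0)" by (rule norm_cauchy_schwarz)
    also have "\<dots> \<le> norm (y - z) * e" using nw by (intro mult_left_mono) auto
    finally show "norm (real_of_ereal (fconj h y) - real_of_ereal (fconj h z) - inner (y - z) w0) \<le> e * norm (y - z)"
      using A unfolding Hr_def by (simp add: mult.commute)
  qed
qed

end

lemma gderiv_unique:
  assumes "GDERIV f x :> D1" "GDERIV f x :> D2" shows "D1 = D2"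
proof -
  have "(\<lambda>h. inner h D1) = (\<lambda>h. inner h D2)"
    using has_derivative_unique assms unfolding gderiv_def by blast
  then have "inner (D1 - D2) D1 = inner (D1 - D2) D2" by metis
  then have "inner (D1 - D2) (D1 - D2) = 0" by (simp add: inner_diff_right)
  then show ?thesis by simp
qed

lemma egrad_eq: "GDERIV (\<lambda>w. real_of_ereal (h w)) z :> D \<Longrightarrow> egrad h z = D"
  unfolding egrad_def by (rule someI2[of _ D]) (auto intro: gderiv_unique)

lemma legendre_conj_grad:
  fixes h :: "'a::euclidean_space \<Rightarrow> ereal"
  assumes G: "Gamma0 h" and SC: "essentially_strictly_convex h" and z: "z \<in> interior (edom (fconj h))"
  shows "z \<in> subdiff h (egrad (fconj h) z)"
proof -
  have P: "proper_fun h" using G by (simp add: Gamma0_def)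
  obtain d B where dB: "d > 0" "cball z (2*d) \<subseteq> interior (edom (fconj h))"
    "\<And>y. y \<in> cball z (2*d) \<Longrightarrow> \<bar>real_of_ereal (fconj h y)\<bar> \<le> B"
    using conj_local_bound[OF P z] by blast
  have bnd: "\<And>y. y \<in> cball z (2*d) \<Longrightarrow> \<bar>Hr h y\<bar> \<le> B" using dB(3) by (simp add: Hr_def)
  obtain w0 where w0: "fconj h z \<le> ereal (inner w0 z) - h w0"
    using max_exists[OF G dB(1,2) bnd, of z] dB(1) by auto
  have "egrad (fconj h) z = w0" by (rule egrad_eq[OF max_deriv[OF G dB(1,2) bnd SC w0]])
  moreover have "fconj h z = ereal (Hr h z)" using finU[OF G dB(1,2) bnd, of z] dB(1) by simp
  ultimately show ?thesis using maxim_subgrad(1)[OF P _ w0] by auto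
qed


lemma eps_le:
  fixes X Y N :: real
  assumes "\<And>e. e > 0 \<Longrightarrow> X \<le> Y + e * N" "N \<ge> 0"
  shows "X \<le> Y"
proof (rule ccontr)
  assume "\<not> X \<le> Y"
  then have xy: "X - Y > 0" by simp
  define e where "e = (X - Y) / (2 * (N + 1))"
  have e: "e > 0" using xy assms(2) by (simp add: e_def)
  have "e * N \<le> e * (N + 1)" using e by simp
  also have "\<dots> = (X - Y) / 2" using assms(2) by (simp add: e_def field_simps)
  finally have "e * N \<le> (X - Y) / 2" .
  then show False using assms(1)[OF e] xy by (simp add: field_simps)
qed

lemma gderiv_exists:
  fixes f :: "'a::euclidean_space \<Rightarrow> real"
  assumes "f differentiable (at c)"
  shows "\<exists>D. GDERIV f c :> D"
proof -
  obtain f' where fd: "(f has_derivative f') (at c)" using assms unfolding differentiable_def by blast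
  have lin: "linear f'" using has_derivative_bounded_linear[OF fd] bounded_linear.linear by blast
  define D where "D = (\<Sum>i\<in>Basis. f' i *\<^sub>R i)"
  have "f' x = inner x D" for x
  proof -
    have "f' x \<bullet> 1 = (\<Sum>i\<in>Basis. (x \<bullet> i) * (f' i \<bullet> 1))" by (rule Linear_Algebra.linear_componentwise[OF lin])
    then show ?thesis by (simp add: D_def inner_sum_right mult.commute)
  qed
  then have "f' = (\<lambda>x. inner x D)" by auto
  then show ?thesis using fd unfolding gderiv_def by blast
qed

lemma egrad_gderiv:
  fixes h :: "'a::euclidean_space \<Rightarrow> ereal"
  assumes "(\<lambda>w. real_of_ereal (h w)) differentiable (at c)"
  shows "GDERIV (\<lambda>w. real_of_ereal (h w)) c :> egrad h c"
  using gderiv_exists[OF assms] egrad_eq by metis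

lemma interior_fin:
  assumes P: "proper_fun h" and c: "c \<in> interior (edom h)"
  obtains r where "r > 0" "ball c r \<subseteq> edom h" "\<And>y. y \<in> ball c r \<Longrightarrow> h y = ereal (real_of_ereal (h y))"
proof -
  obtain r where r: "r > 0" "ball c r \<subseteq> edom h" using c by (meson mem_interior)
  have "h y = ereal (real_of_ereal (h y))" if "y \<in> ball c r" for y
    using r(2) that proper_ne_minf[OF P, of y] unfolding edom_def by (cases "h y") auto
  then show ?thesis using that r by blast
qed

lemma edom_fin: "proper_fun h \<Longrightarrow> a \<in> edom h \<Longrightarrow> h a = ereal (real_of_ereal (h a))"
  using proper_ne_minf[of h a] unfolding edom_def by (cases "h a") auto

lemma grad_ineq:
  fixes h :: "'a::euclidean_space \<Rightarrow> ereal"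
  assumes G: "Gamma0 h" and c: "c \<in> interior (edom h)" and D: "GDERIV (\<lambda>w. real_of_ereal (h w)) c :> D"
    and a: "a \<in> edom h"
  shows "inner (a - c) D \<le> real_of_ereal (h a) - real_of_ereal (h c)"
proof (rule eps_le[where N = "norm (a - c)"])
  fix e :: real assume e: "e > 0"
  have P: "proper_fun h" using G by (simp add: Gamma0_def)
  obtain d where d: "d > 0" "\<And>y. norm (y - c) < d \<Longrightarrow>
      norm (real_of_ereal (h y) - real_of_ereal (h c) - inner (y - c) D) \<le> e * norm (y - c)"
    using D e unfolding gderiv_def has_derivative_at_alt by blast
  show "inner (a - c) D \<le> real_of_ereal (h a) - real_of_ereal (h c) + e * norm (a - c)"
  proof (cases "a = c")
    case True then show ?thesis by simp
  next
    case False
    then have na: "norm (a - c) > 0" by simp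
    define t where "t = min (1/2) (d / (2 * norm (a - c)))"
    have t: "0 < t" "t \<le> 1" using d na by (auto simp: t_def)
    have tn: "t * norm (a - c) < d"
    proof -
      have "t * norm (a - c) \<le> (d / (2 * norm (a - c))) * norm (a - c)"
        using na by (intro mult_right_mono) (auto simp: t_def)
      also have "\<dots> = d / 2" using na by simp
      finally show ?thesis using d by simp
    qed
    define y where "y = (1 - t) *\<^sub>R c + t *\<^sub>R a"
    have yc: "y - c = t *\<^sub>R (a - c)" by (simp add: y_def algebra_simps)
    have cE: "c \<in> edom h" using c interior_subset by blast
    have hc: "h c = ereal (real_of_ereal (h c))" using edom_fin[OF P cE] .
    have ha: "h a = ereal (real_of_ereal (h a))" using edom_fin[OF P a] .
    have hy: "h y \<le> ereal ((1 - t) * real_of_ereal (h c) + t * real_of_ereal (h a))"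
      unfolding y_def by (rule epi_convex[OF Gamma0_convex[OF G]]) (use hc ha t in auto)
    then have yE: "y \<in> edom h" unfolding edom_def using le_less_trans by fastforce
    have hy': "real_of_ereal (h y) \<le> (1 - t) * real_of_ereal (h c) + t * real_of_ereal (h a)"
      using hy edom_fin[OF P yE] by (metis ereal_less_eq(3))
    have "norm (y - c) < d" using yc tn t by simp
    from d(2)[OF this] have
      "t * inner (a - c) D - e * (t * norm (a - c)) \<le> real_of_ereal (h y) - real_of_ereal (h c)"
      using yc t by (simp add: abs_le_iff)
    with hy' have "t * (inner (a - c) D) \<le> t * (real_of_ereal (h a) - real_of_ereal (h c) + e * norm (a - c))"
      by (simp add: algebra_simps)
    then show ?thesis using t by simp
  qed
qed simp

lemma subgrad_eq_grad:
  fixes h :: "'a::euclidean_space \<Rightarrow> ereal"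
  assumes P: "proper_fun h" and c: "c \<in> interior (edom h)" and D: "GDERIV (\<lambda>w. real_of_ereal (h w)) c :> D"
    and z: "z \<in> subdiff h c"
  shows "D = z"
proof -
  define v where "v = z - D"
  obtain r where r: "r > 0" "ball c r \<subseteq> edom h" "\<And>y. y \<in> ball c r \<Longrightarrow> h y = ereal (real_of_ereal (h y))"
    using interior_fin[OF P c] by blast
  have hc: "h c = ereal (real_of_ereal (h c))" using r(1) r(3)[of c] by simp
  have "norm v ^ 2 \<le> 0"
  proof (rule eps_le[where N = "norm v"])
    fix e :: real assume e: "e > 0"
    obtain d where d: "d > 0" "\<And>y. norm (y - c) < d \<Longrightarrow>
        norm (real_of_ereal (h y) - real_of_ereal (h c) - inner (y - c) D) \<le> e * norm (y - c)"
      using D e unfolding gderiv_def has_derivative_at_alt by blast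
    show "norm v ^ 2 \<le> 0 + e * norm v"
    proof (cases "v = 0")
      case True then show ?thesis by simp
    next
      case False
      then have nv: "norm v > 0" by simp
      define t where "t = min d r / (2 * norm v)"
      have t: "t > 0" using d r nv by (simp add: t_def)
      have "t * norm v = min d r / 2" using nv by (simp add: t_def)
      moreover have "min d r > 0" using d r by simp
      ultimately have tn: "t * norm v < min d r" by linarith
      define y where "y = c + t *\<^sub>R v"
      have yc: "y - c = t *\<^sub>R v" by (simp add: y_def)
      have ny: "norm (y - c) < min d r" using yc t tn by simp
      then have yb: "y \<in> ball c r" by (simp add: dist_norm norm_minus_commute)
      have "h c + ereal (inner z (y - c)) \<le> h y" using z unfolding subdiff_def by blast
      then have 1: "real_of_ereal (h c) + t * inner z v \<le> real_of_ereal (h y)"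
        using hc r(3)[OF yb] yc by (metis ereal_less_eq(3) plus_ereal.simps(1) inner_scaleR_right)
      have 2: "real_of_ereal (h y) - real_of_ereal (h c) - t * inner v D \<le> e * (t * norm v)"
        using d(2)[of y] ny yc t by (simp add: abs_le_iff inner_commute)
      have "t * (inner z v - inner v D) \<le> t * (e * norm v)" using 1 2 by (simp add: algebra_simps)
      then have "inner z v - inner v D \<le> e * norm v" using t by simp
      moreover have "inner z v - inner v D = norm v ^ 2"
        by (simp add: v_def power2_norm_eq_inner inner_diff_left inner_diff_right inner_commute)
      ultimately show ?thesis by simp
    qed
  qed simp
  then show ?thesis unfolding v_def by simp
qed

lemma legendre_update:
  fixes h :: "'a::euclidean_space \<Rightarrow> ereal"
  assumes L: "Legendre h" and z: "z \<in> interior (edom (fconj h))"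
    and w: "egrad (fconj h) z \<in> interior (edom h)"
  shows "egrad h (egrad (fconj h) z) = z"
proof -
  have G: "Gamma0 h" and SC: "essentially_strictly_convex h" and ES: "essentially_smooth h"
    using L by (auto simp: Legendre_def)
  have sg: "z \<in> subdiff h (egrad (fconj h) z)" by (rule legendre_conj_grad[OF G SC z])
  have "(\<lambda>v. real_of_ereal (h v)) differentiable (at (egrad (fconj h) z))"
    using ES w unfolding essentially_smooth_def by blast
  from egrad_gderiv[OF this] show ?thesis
    using subgrad_eq_grad[OF Gamma0_proper[OF G] w _ sg] by blast
qed


lemma tr_inner: "inner (transpose A *v y) x = inner y (A *v (x::real^'n))"
proof -
  have "transpose A *v y = y v* A" using vector_transpose_matrix[of y "transpose A"] by simp
  then show ?thesis by (simp add: dot_lmul_matrix)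
qed

lemma tr_inner': "inner x (transpose A *v y) = inner (A *v (x::real^'n)) y"
  using tr_inner[of A y x] by (simp add: inner_commute)

lemma vstar_inner'[simp]: "inner (y v* A) x = inner (A *v (x::real^'n)) y"
  unfolding dot_lmul_matrix by (rule inner_commute)

lemma vstar_inner[simp]: "inner x (y v* A) = inner (A *v (x::real^'n)) y"
  by (subst inner_commute) (rule vstar_inner')

lemma subdiff_fin:
  assumes P: "\<And>x. h x \<noteq> -\<infinity>" and q: "q \<in> subdiff h y"
  shows "h y = ereal (real_of_ereal (h y))" "\<And>y'. ereal (real_of_ereal (h y) + inner q (y' - y)) \<le> h y'"
proof -
  show hy: "h y = ereal (real_of_ereal (h y))" using q P[of y] unfolding subdiff_def by (cases "h y") auto
  fix y' show "ereal (real_of_ereal (h y) + inner q (y' - y)) \<le> h y'"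
    using q hy unfolding subdiff_def by (metis (mono_tags, lifting) mem_Collect_eq plus_ereal.simps(1))
qed

lemma subdiff_conj:
  assumes P: "proper_fun f" and p: "p \<in> subdiff f x"
  shows "fconj f p = ereal (inner x p - real_of_ereal (f x))"
    "\<And>w. ereal (inner x w - real_of_ereal (f x)) \<le> fconj f w"
proof -
  have fx: "f x = ereal (real_of_ereal (f x))" using subdiff_fin(1)[OF proper_ne_minf[OF P] p] .
  show lb: "ereal (inner x w - real_of_ereal (f x)) \<le> fconj f w" for w
    using conj_ge[of x w f] fx by (metis ereal_minus(1))
  have "fconj f p \<le> ereal (inner x p - real_of_ereal (f x))" unfolding conj_le_iff
  proof
    fix x'
    show "ereal (inner x' p) - f x' \<le> ereal (inner x p - real_of_ereal (f x))"
    proof (cases "f x'")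
      case (real r)
      have "ereal (real_of_ereal (f x) + inner p (x' - x)) \<le> f x'"
        using subdiff_fin(2)[OF proper_ne_minf[OF P] p] .
      then show ?thesis using real by (simp add: inner_diff_right inner_commute)
    qed (use proper_ne_minf[OF P, of x'] in auto)
  qed
  then show "fconj f p = ereal (inner x p - real_of_ereal (f x))" using lb[of p] by simp
qed

lemma subdiff_mono:
  assumes P: "\<And>x. h x \<noteq> -\<infinity>" and p: "p \<in> subdiff h x" and p': "p' \<in> subdiff h x'"
  shows "inner (p - p') (x - x') \<ge> 0"
proof -
  have 1: "real_of_ereal (h x) + inner p (x' - x) \<le> real_of_ereal (h x')"
    using subdiff_fin(2)[OF P p, of x'] subdiff_fin(1)[OF P p'] by (metis ereal_less_eq(3))
  have 2: "real_of_ereal (h x') + inner p' (x - x') \<le> real_of_ereal (h x)"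
    using subdiff_fin(2)[OF P p', of x] subdiff_fin(1)[OF P p] by (metis ereal_less_eq(3))
  have "inner (p - p') (x - x') = - inner p (x' - x) - inner p' (x - x')"
    by (simp add: inner_diff_left inner_diff_right inner_commute)
  then show ?thesis using 1 2 by linarith
qed

lemma F_lower:
  fixes f :: "real^'n \<Rightarrow> ereal" and g :: "real^'m \<Rightarrow> ereal"
  assumes f: "Gamma0 f" and g: "Gamma0 g" and sol: "(xs, ys) \<in> zerT f g A b"
  shows "\<exists>r0. Fstar f g A b 0 ys = ereal r0 \<and> (\<forall>v y'. ereal (r0 + inner xs v) \<le> Fstar f g A b v y')"
proof -
  have Pf: "proper_fun f" and Pg: "proper_fun g" using f g by (auto simp: Gamma0_def)
  obtain p q where p: "p \<in> subdiff f xs" and q: "q \<in> subdiff (fconj g) ys"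
    and pe: "0 = p + transpose A *v ys" and qe: "0 = q + b - A *v xs"
    using sol unfolding zerT_def KKT_def by auto
  have pe': "p = - (transpose A *v ys)" using pe by (simp add: eq_neg_iff_add_eq_0)
  have qe': "q = A *v xs - b" using qe by (simp add: algebra_simps eq_diff_eq)
  have Pgs: "\<And>y. fconj g y \<noteq> -\<infinity>" using conj_ne_minf[OF Pg] .
  define rf where "rf = real_of_ereal (f xs)"
  define rg where "rg = real_of_ereal (fconj g ys)"
  define r0 where "r0 = inner xs p - rf + inner b ys + rg"
  have fgs: "fconj g ys = ereal rg" using subdiff_fin(1)[OF Pgs q] rg_def by simp
  have ffs: "fconj f (0 - transpose A *v ys) = ereal (inner xs p - rf)"
    using subdiff_conj(1)[OF Pf p] pe' rf_def by simp
  have F0: "Fstar f g A b 0 ys = ereal r0"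
    unfolding Fstar_def r0_def by (simp only: ffs fgs plus_ereal.simps)
  have "ereal (r0 + inner xs v) \<le> Fstar f g A b v y'" for v y'
  proof -
    have a: "ereal (inner xs (v - transpose A *v y') - rf) \<le> fconj f (v - transpose A *v y')"
      using subdiff_conj(2)[OF Pf p] rf_def by blast
    have c: "ereal (rg + inner q (y' - ys)) \<le> fconj g y'"
      using subdiff_fin(2)[OF Pgs q] rg_def by blast
    have i1: "inner xs (v - transpose A *v y') = inner xs v - inner (A *v xs) y'"
      by (simp only: inner_diff_right tr_inner')
    have i2: "inner xs p = - inner (A *v xs) ys" by (simp only: pe' inner_minus_right tr_inner')
    have i3: "inner q (y' - ys) = inner (A *v xs) y' - inner (A *v xs) ys - inner b y' + inner b ys"
      by (simp only: qe' inner_diff_left inner_diff_right)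
    have eq: "r0 + inner xs v = (inner xs (v - transpose A *v y') - rf) + inner b y' + (rg + inner q (y' - ys))"
      unfolding r0_def i1 i2 i3 by simp
    have "ereal (r0 + inner xs v) = ereal (inner xs (v - transpose A *v y') - rf) + ereal (inner b y') + ereal (rg + inner q (y' - ys))"
      by (simp only: eq plus_ereal.simps)
    also have "\<dots> \<le> Fstar f g A b v y'" unfolding Fstar_def
      by (intro add_mono a c order_refl)
    finally show ?thesis .
  qed
  then show ?thesis using F0 by blast
qed

lemma F_upper:
  fixes f :: "real^'n \<Rightarrow> ereal" and g :: "real^'m \<Rightarrow> ereal"
  assumes f: "Gamma0 f" and g: "Gamma0 g" and sol: "(xs, ys) \<in> zerT f g A b"
    and F0: "Fstar f g A b 0 ys = ereal r0" and vu: "(v, u) \<in> KKT f g A b s y'"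
  shows "Fstar f g A b v y' \<le> ereal (r0 + inner s v + inner u (y' - ys))"
proof -
  have Pf: "proper_fun f" and Pg: "proper_fun g" using f g by (auto simp: Gamma0_def)
  have Pgs: "\<And>y. fconj g y \<noteq> -\<infinity>" using conj_ne_minf[OF Pg] .
  obtain p q where p: "p \<in> subdiff f s" and q: "q \<in> subdiff (fconj g) y'"
    and pe: "v = p + transpose A *v y'" and qe: "u = q + b - A *v s"
    using vu unfolding KKT_def by auto
  define rf where "rf = real_of_ereal (f s)"
  define rg where "rg = real_of_ereal (fconj g y')"
  have pv: "p = v - transpose A *v y'" using pe by simp
  have fp: "fconj f (v - transpose A *v y') = ereal (inner s p - rf)"
    using subdiff_conj(1)[OF Pf p] pv by (simp add: rf_def)
  have gy: "fconj g y' = ereal rg" using subdiff_fin(1)[OF Pgs q] rg_def by simp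
  have fa: "ereal (inner s (0 - transpose A *v ys) - rf) \<le> fconj f (0 - transpose A *v ys)"
    using subdiff_conj(2)[OF Pf p] rf_def by blast
  have ga: "ereal (rg + inner q (ys - y')) \<le> fconj g ys"
    using subdiff_fin(2)[OF Pgs q] rg_def by blast
  have "ereal (inner s (0 - transpose A *v ys) - rf) + ereal (inner b ys) + ereal (rg + inner q (ys - y'))
      \<le> fconj f (0 - transpose A *v ys) + ereal (inner b ys) + fconj g ys"
    by (intro add_mono fa ga order_refl)
  also have "\<dots> = ereal r0" using F0 unfolding Fstar_def .
  finally have le: "inner s (0 - transpose A *v ys) - rf + inner b ys + (rg + inner q (ys - y')) \<le> r0" by simp
  have i1: "inner s (0 - transpose A *v ys) = - inner (A *v s) ys" by (simp only: diff_0 inner_minus_right tr_inner')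
  have i2: "inner s p = inner s v - inner (A *v s) y'" by (simp only: pv inner_diff_right tr_inner')
  have i3: "inner u (y' - ys) = inner q y' - inner q ys + inner b y' - inner b ys - inner (A *v s) y' + inner (A *v s) ys"
    by (simp only: qe inner_diff_left inner_diff_right inner_add_left)
  have i4: "inner q (ys - y') = inner q ys - inner q y'" by (simp only: inner_diff_right)
  have "inner s p - rf + inner b y' + rg \<le> r0 + inner s v + inner u (y' - ys)"
    using le unfolding i1 i2 i3 i4 by simp
  then show ?thesis unfolding Fstar_def fp gy by simp
qed


lemma hsn_real: "real_of_ereal (half_sq_norm w) = (1/2) * (norm w)\<^sup>2"
  by (simp add: half_sq_norm_def)

lemma hsn_grad: "egrad (half_sq_norm :: 'a::euclidean_space \<Rightarrow> ereal) c = c"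
proof (rule egrad_eq)
  have "((\<lambda>w::'a. (1/2) * inner w w) has_derivative (\<lambda>h. (1/2) * (inner h c + inner c h))) (at c)"
    by (auto intro!: derivative_eq_intros)
  then have "((\<lambda>w::'a. (1/2) * inner w w) has_derivative (\<lambda>h. inner h c)) (at c)"
    by (simp add: inner_commute)
  then show "GDERIV (\<lambda>w. real_of_ereal (half_sq_norm w)) c :> c"
    unfolding gderiv_def hsn_real power2_norm_eq_inner .
qed

lemma hsn_conj: "fconj (half_sq_norm :: 'a::real_inner \<Rightarrow> ereal) = half_sq_norm"
proof
  fix v :: 'a
  have "fconj half_sq_norm v \<le> half_sq_norm v" unfolding conj_le_iff
  proof
    fix x :: 'a
    have "0 \<le> (norm (x - v))\<^sup>2" by simp
    then have "inner x v - (1/2) * (norm x)\<^sup>2 \<le> (1/2) * (norm v)\<^sup>2"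
      by (simp add: power2_norm_eq_inner inner_diff_left inner_diff_right inner_commute algebra_simps)
    then show "ereal (inner x v) - half_sq_norm x \<le> half_sq_norm v" by (simp add: half_sq_norm_def)
  qed
  moreover have "ereal (inner v v) - half_sq_norm v \<le> fconj half_sq_norm v" by (rule conj_ge)
  then have "half_sq_norm v \<le> fconj half_sq_norm v"
    by (simp add: half_sq_norm_def power2_norm_eq_inner)
  ultimately show "fconj half_sq_norm v = half_sq_norm v" by simp
qed

lemma hsn_edom: "edom half_sq_norm = UNIV"
  by (simp add: edom_def half_sq_norm_def)

lemma hsn_breg: "Bregman (half_sq_norm :: 'a::euclidean_space \<Rightarrow> ereal) a c = ereal ((1/2) * (norm (a - c))\<^sup>2)"
  unfolding Bregman_def hsn_edom hsn_grad
  by (simp add: half_sq_norm_def power2_norm_eq_inner inner_diff_left inner_diff_right inner_commute algebra_simps)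

lemma four_point:
  fixes a a' c d :: "'a::real_inner"
  shows "2 * inner (a - a') (c - d) = (norm (a - d))\<^sup>2 - (norm (a - c))\<^sup>2 + (norm (a' - c))\<^sup>2 - (norm (a' - d))\<^sup>2"
  by (simp add: power2_norm_eq_inner inner_diff_left inner_diff_right inner_commute algebra_simps)

lemma kkt_mono:
  fixes f :: "real^'n \<Rightarrow> ereal" and g :: "real^'m \<Rightarrow> ereal"
  assumes f: "Gamma0 f" and g: "Gamma0 g" and sol: "(xs, ys) \<in> zerT f g A b"
    and vu: "(v, u) \<in> KKT f g A b s y'"
  shows "0 \<le> inner v (s - xs) + inner u (y' - ys)"
proof -
  have Pf: "proper_fun f" and Pg: "proper_fun g" using f g by (auto simp: Gamma0_def)
  have Pgs: "\<And>y. fconj g y \<noteq> -\<infinity>" using conj_ne_minf[OF Pg] .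
  obtain p q where p: "p \<in> subdiff f s" and q: "q \<in> subdiff (fconj g) y'"
    and pe: "v = p + transpose A *v y'" and qe: "u = q + b - A *v s"
    using vu unfolding KKT_def by auto
  obtain p0 q0 where p0: "p0 \<in> subdiff f xs" and q0: "q0 \<in> subdiff (fconj g) ys"
    and pe0: "0 = p0 + transpose A *v ys" and qe0: "0 = q0 + b - A *v xs"
    using sol unfolding zerT_def KKT_def by auto
  have m1: "0 \<le> inner (p - p0) (s - xs)" by (rule subdiff_mono[OF proper_ne_minf[OF Pf] p p0])
  have m2: "0 \<le> inner (q - q0) (y' - ys)" by (rule subdiff_mono[OF Pgs q q0])
  have v': "v = (p - p0) + transpose A *v (y' - ys)"
    using pe pe0 by (simp add: matrix_vector_mult_diff_distrib algebra_simps)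
  have u': "u = (q - q0) - A *v (s - xs)"
    using qe qe0 by (simp add: matrix_vector_mult_diff_distrib algebra_simps)
  have "inner v (s - xs) + inner u (y' - ys) = inner (p - p0) (s - xs) + inner (q - q0) (y' - ys)"
    unfolding v' u' inner_add_left inner_diff_left tr_inner by (simp add: inner_commute inner_diff_left)
  then show ?thesis using m1 m2 by simp
qed

lemma F_lsc:
  fixes f :: "real^'n \<Rightarrow> ereal" and g :: "real^'m \<Rightarrow> ereal"
  assumes Pf: "proper_fun f" and Pg: "proper_fun g" and vl: "vs \<longlonglongrightarrow> v0" and yl: "ys \<longlonglongrightarrow> y0"
    and c: "\<And>k. Fstar f g A b (vs k) (ys k) = ereal (cs k)" and cl: "cs \<longlonglongrightarrow> c"
  shows "Fstar f g A b v0 y0 \<le> ereal c"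
proof -
  have key: "inner x1 (v0 - transpose A *v y0) - a1 + inner b y0 + (inner x2 y0 - a2) \<le> c"
    if a1: "f x1 = ereal a1" and a2: "g x2 = ereal a2" for x1 x2 a1 a2
  proof -
    have le: "inner x1 (vs k - transpose A *v ys k) - a1 + inner b (ys k) + (inner x2 (ys k) - a2) \<le> cs k" for k
    proof -
      have "ereal (inner x1 (vs k - transpose A *v ys k) - a1) \<le> fconj f (vs k - transpose A *v ys k)"
        using conj_ge[of x1 _ f] a1 by (metis ereal_minus(1))
      moreover have "ereal (inner x2 (ys k) - a2) \<le> fconj g (ys k)"
        using conj_ge[of x2 _ g] a2 by (metis ereal_minus(1))
      ultimately have "ereal (inner x1 (vs k - transpose A *v ys k) - a1) + ereal (inner b (ys k)) + ereal (inner x2 (ys k) - a2)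
          \<le> Fstar f g A b (vs k) (ys k)" unfolding Fstar_def by (intro add_mono order_refl)
      then show ?thesis using c[of k] by simp
    qed
    have "(\<lambda>k. inner x1 (vs k - transpose A *v ys k) - a1 + inner b (ys k) + (inner x2 (ys k) - a2))
        \<longlonglongrightarrow> inner x1 (v0 - transpose A *v y0) - a1 + inner b y0 + (inner x2 y0 - a2)"
      by (intro tendsto_intros vl yl bounded_linear.tendsto[OF matrix_vector_mul_bounded_linear])
    from LIMSEQ_le[OF this cl] le show ?thesis by blast
  qed
  obtain x2 a2 where x2: "g x2 = ereal a2" using proper_ex_fin[OF Pg] by blast
  have ff: "fconj f (v0 - transpose A *v y0) \<le> ereal (c - inner b y0 - (inner x2 y0 - a2))"
    unfolding conj_le_iff
  proof
    fix x1 show "ereal (inner x1 (v0 - transpose A *v y0)) - f x1 \<le> ereal (c - inner b y0 - (inner x2 y0 - a2))"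
    proof (cases "f x1")
      case (real a1) then show ?thesis using key[OF real x2] by simp
    qed (use proper_ne_minf[OF Pf, of x1] in auto)
  qed
  define F1 where "F1 = real_of_ereal (fconj f (v0 - transpose A *v y0))"
  have F1: "fconj f (v0 - transpose A *v y0) = ereal F1"
    using ff conj_ne_minf[OF Pf, of "v0 - transpose A *v y0"] unfolding F1_def
    by (cases "fconj f (v0 - transpose A *v y0)") auto
  have gg: "fconj g y0 \<le> ereal (c - inner b y0 - F1)"
    unfolding conj_le_iff
  proof
    fix x2' show "ereal (inner x2' y0) - g x2' \<le> ereal (c - inner b y0 - F1)"
    proof (cases "g x2'")
      case (real a2')
      have "fconj f (v0 - transpose A *v y0) \<le> ereal (c - inner b y0 - (inner x2' y0 - a2'))"
        unfolding conj_le_iff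
      proof
        fix x1 show "ereal (inner x1 (v0 - transpose A *v y0)) - f x1 \<le> ereal (c - inner b y0 - (inner x2' y0 - a2'))"
        proof (cases "f x1")
          case (real a1) then show ?thesis using key[OF real \<open>g x2' = ereal a2'\<close>] by simp
        qed (use proper_ne_minf[OF Pf, of x1] in auto)
      qed
      then show ?thesis using F1 real by simp
    qed (use proper_ne_minf[OF Pg, of x2'] in auto)
  qed
  have "Fstar f g A b v0 y0 \<le> ereal F1 + ereal (inner b y0) + ereal (c - inner b y0 - F1)"
    unfolding Fstar_def F1 by (intro add_mono gg order_refl)
  then show ?thesis by simp
qed

theorem mainTheorem14:
  fixes f :: "real^'n \<Rightarrow> ereal" and g :: "real^'m \<Rightarrow> ereal"
    and A :: "real^'n^'m" and b :: "real^'m"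
    and \<psi> :: "real^'n \<Rightarrow> ereal" and \<phi> :: "real^'m \<Rightarrow> ereal"
    and x s v :: "nat \<Rightarrow> real^'n" and y u :: "nat \<Rightarrow> real^'m"
    and \<sigma>s \<rho>s :: "nat \<Rightarrow> real" and \<sigma> \<rho> :: real
    and xstar :: "real^'n" and ystar :: "real^'m"
  assumes f: "Gamma0 f" and g: "Gamma0 g"
    and psi: "\<psi> = half_sq_norm"
    and phi: "Legendre \<phi>"
    and qualif: "interior (edom (sepsum \<psi> \<phi>)) \<inter> domT f g A b \<noteq> {}"
    and x0: "x 0 \<in> interior (edom \<psi>)" and y0: "y 0 \<in> interior (edom \<phi>)"
    and sigma_pos: "\<sigma> > 0" and sigma: "\<And>k. \<sigma>s k \<ge> \<sigma>"
    and rho_lt: "\<rho> < 1" and rho: "\<And>k. 0 \<le> \<rho>s k \<and> \<rho>s k \<le> \<rho>"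
    and s_dom: "\<And>k. s k \<in> edom \<psi>"
    and vu: "\<And>k. (v k, u k) \<in> KKT f g A b (s k) (y (Suc k))"
    and x_arg: "\<And>k. egrad \<psi> (x k) - \<sigma>s k *\<^sub>R v k \<in> interior (edom (fconj \<psi>))"
    and x_upd: "\<And>k. x (Suc k) = egrad (fconj \<psi>) (egrad \<psi> (x k) - \<sigma>s k *\<^sub>R v k)"
    and x_int: "\<And>k. x (Suc k) \<in> interior (edom \<psi>)"
    and y_arg: "\<And>k. egrad \<phi> (y k) - \<sigma>s k *\<^sub>R u k \<in> interior (edom (fconj \<phi>))"
    and y_upd: "\<And>k. y (Suc k) = egrad (fconj \<phi>) (egrad \<phi> (y k) - \<sigma>s k *\<^sub>R u k)"
    and y_int: "\<And>k. y (Suc k) \<in> interior (edom \<phi>)"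
    and inexact: "\<And>k. Bregman \<psi> (s k) (x (Suc k))
                    \<le> ereal (\<rho>s k) * (Bregman \<psi> (s k) (x k) + Bregman \<phi> (y (Suc k)) (y k))"
    and sol: "(xstar, ystar) \<in> zerT f g A b"
    and ystar_dom: "ystar \<in> edom \<phi>"
    and bdd: "bounded (range (\<lambda>k. y (Suc k)))"
  shows "(\<lambda>k. Fstar f g A b (v k) (y (Suc k))) \<longlonglongrightarrow> Fstar f g A b 0 ystar
       \<and> (\<forall>yinf. (\<exists>r. strict_mono r \<and> (\<lambda>k. y (Suc (r k))) \<longlonglongrightarrow> yinf)
                 \<longrightarrow> yinf \<in> argmin_set (Fstar f g A b 0))"
proof -
  have Pf: "proper_fun f" and Pg: "proper_fun g" using f g by (auto simp: Gamma0_def)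
  have Gphi: "Gamma0 \<phi>" and ESphi: "essentially_smooth \<phi>" using phi by (auto simp: Legendre_def)
  have Pphi: "proper_fun \<phi>" using Gphi by (simp add: Gamma0_def)
  have gpsi: "\<And>c. egrad \<psi> c = c" using psi hsn_grad by simp
  have cpsi: "fconj \<psi> = \<psi>" using psi hsn_conj by simp
  have xs: "\<And>k. x (Suc k) = x k - \<sigma>s k *\<^sub>R v k" using x_upd gpsi cpsi by simp
  have yint: "\<And>k. y k \<in> interior (edom \<phi>)" using y0 y_int by (case_tac k) auto
  define gy where "gy k = egrad \<phi> (y k)" for k
  have gys: "gy (Suc k) = gy k - \<sigma>s k *\<^sub>R u k" for k
  proof -
    have "egrad \<phi> (egrad (fconj \<phi>) (egrad \<phi> (y k) - \<sigma>s k *\<^sub>R u k)) = egrad \<phi> (y k) - \<sigma>s k *\<^sub>R u k"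
      by (rule legendre_update[OF phi y_arg]) (use y_int y_upd in metis)
    then show ?thesis using y_upd[of k] by (simp add: gy_def)
  qed
  have gder: "GDERIV (\<lambda>w. real_of_ereal (\<phi> w)) (y k) :> gy k" for k
    unfolding gy_def by (rule egrad_gderiv) (use ESphi yint in \<open>auto simp: essentially_smooth_def\<close>)
  define Ph where "Ph w = real_of_ereal (\<phi> w)" for w
  have yE: "y k \<in> edom \<phi>" for k using yint interior_subset by blast
  have phiy: "\<phi> (y k) = ereal (Ph (y k))" for k using edom_fin[OF Pphi yE] Ph_def by simp
  have phis: "\<phi> ystar = ereal (Ph ystar)" using edom_fin[OF Pphi ystar_dom] Ph_def by simp
  define Dst where "Dst k = Ph ystar - Ph (y k) - inner (gy k) (ystar - y k)" for k
  define Dyy where "Dyy k = Ph (y (Suc k)) - Ph (y k) - inner (gy k) (y (Suc k) - y k)" for k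
  have Dst_nn: "0 \<le> Dst k" for k
    using grad_ineq[OF Gphi yint gder ystar_dom] unfolding Dst_def Ph_def by (simp add: inner_commute)
  have Dyy_nn: "0 \<le> Dyy k" for k
    using grad_ineq[OF Gphi yint gder yE[of "Suc k"]] unfolding Dyy_def Ph_def by (simp add: inner_commute)
  have inex: "(1/2) * (norm (x (Suc k) - s k))\<^sup>2 \<le> \<rho>s k * ((1/2) * (norm (x k - s k))\<^sup>2 + Dyy k)" for k
  proof -
    have "Bregman \<phi> (y (Suc k)) (y k) = ereal (Dyy k)"
      unfolding Bregman_def Dyy_def gy_def using yE[of "Suc k"] yint[of k] phiy by simp
    then show ?thesis using inexact[of k] unfolding psi hsn_breg
      by (simp add: norm_minus_commute)
  qed
  have mono: "0 \<le> inner (v k) (s k - xstar) + inner (u k) (y (Suc k) - ystar)" for k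
    by (rule kkt_mono[OF f g sol vu])
  define V where "V k = (1/2) * (norm (x k - xstar))\<^sup>2 + Dst k" for k
  define E where "E k = (1/2) * (norm (x k - s k))\<^sup>2 + Dyy k" for k
  define T where "T k = inner (v k) (s k - xstar) + inner (u k) (y (Suc k) - ystar)" for k
  have E_nn: "0 \<le> E k" for k using Dyy_nn[of k] by (simp add: E_def)
  have V_nn: "0 \<le> V k" for k using Dst_nn[of k] by (simp add: V_def)
  have T_nn: "0 \<le> T k" for k using mono[of k] by (simp add: T_def)
  have sig: "\<sigma>s k > 0" for k using sigma[of k] sigma_pos by simp
  have ident: "\<sigma>s k * T k = V k - V (Suc k) - E k + (1/2) * (norm (x (Suc k) - s k))\<^sup>2" for k
  proof -
    have 1: "\<sigma>s k * inner (v k) (s k - xstar) = (1/2) * (2 * inner (x k - x (Suc k)) (s k - xstar))"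
      using xs[of k] by simp
    have 2: "\<sigma>s k * inner (u k) (y (Suc k) - ystar) = inner (gy k - gy (Suc k)) (y (Suc k) - ystar)"
      using gys[of k] by simp
    have 3: "inner (gy k - gy (Suc k)) (y (Suc k) - ystar) = Dst k - Dst (Suc k) - Dyy k"
      unfolding Dst_def Dyy_def by (simp add: inner_diff_left inner_diff_right)
    show ?thesis unfolding T_def distrib_left 1 2 3 four_point V_def E_def by simp
  qed
  have step: "V (Suc k) \<le> V k - (1 - \<rho>) * E k" and Tle: "\<sigma>s k * T k \<le> V k - V (Suc k)" for k
  proof -
    have r: "0 \<le> \<rho>s k" "\<rho>s k \<le> \<rho>" using rho[of k] by auto
    have "(1/2) * (norm (x (Suc k) - s k))\<^sup>2 \<le> \<rho>s k * E k" using inex[of k] by (simp add: E_def)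
    also have "\<dots> \<le> \<rho> * E k" using r E_nn[of k] by (simp add: mult_right_mono)
    finally have a: "(1/2) * (norm (x (Suc k) - s k))\<^sup>2 \<le> \<rho> * E k" .
    have b: "0 \<le> \<sigma>s k * T k" using sig[of k] T_nn[of k] by simp
    show "V (Suc k) \<le> V k - (1 - \<rho>) * E k" using ident[of k] a b by (simp add: algebra_simps)
    have "\<rho> * E k \<le> 1 * E k" using E_nn[of k] rho_lt by (intro mult_right_mono) auto
    then show "\<sigma>s k * T k \<le> V k - V (Suc k)" using ident[of k] a by linarith
  qed
  have rr: "0 \<le> \<rho>" using rho[of 0] by auto
  have Vstep: "V (Suc k) \<le> V k" for k
  proof -
    have "0 \<le> (1 - \<rho>) * E k" using E_nn[of k] rho_lt by simp
    then show ?thesis using step[of k] by linarith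
  qed
  have dec: "decseq V" using Vstep by (simp add: decseq_Suc_iff)
  obtain L where VL: "V \<longlonglongrightarrow> L" using decseq_convergent[OF dec, of 0] V_nn by blast
  have Vle0: "V k \<le> V 0" for k using decseqD[OF dec, of 0 k] by simp
  have sumE: "(1 - \<rho>) * (\<Sum>i<n. E i) \<le> V 0 - V n" for n
  proof (induction n)
    case (Suc n) then show ?case using step[of n] by (simp add: distrib_left)
  qed simp
  have rpos: "1 - \<rho> > 0" using rho_lt by simp
  have Ebd: "(\<Sum>i<n. E i) \<le> V 0 / (1 - \<rho>)" for n
    using sumE[of n] V_nn[of n] rpos by (simp add: pos_le_divide_eq mult.commute)
  have "summable E" by (rule summableI_nonneg_bounded[OF E_nn Ebd])
  then have EL: "E \<longlonglongrightarrow> 0" by (rule summable_LIMSEQ_zero)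
  have Ek: "E k \<le> V 0 / (1 - \<rho>)" for k
  proof -
    have "(1 - \<rho>) * E k \<le> V 0" using step[of k] V_nn[of "Suc k"] Vle0[of k] by simp
    then show ?thesis using rpos by (simp add: pos_le_divide_eq mult.commute)
  qed
  define R where "R k = sqrt (2 * E k)" for k
  have RL: "R \<longlonglongrightarrow> 0"
  proof -
    have "(\<lambda>k. sqrt (2 * E k)) \<longlonglongrightarrow> sqrt (2 * 0)" by (intro tendsto_intros EL)
    then show ?thesis by (simp add: R_def[abs_def])
  qed
  have n1: "norm (x k - s k) \<le> R k" for k
  proof -
    have "(norm (x k - s k))\<^sup>2 \<le> 2 * E k" using Dyy_nn[of k] by (simp add: E_def)
    then show ?thesis unfolding R_def by (rule real_le_rsqrt)
  qed
  have n2: "norm (x (Suc k) - s k) \<le> R k" for k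
  proof -
    have "\<rho>s k * E k \<le> 1 * E k" using rho[of k] rho_lt E_nn[of k] by (intro mult_right_mono) auto
    then have "\<rho>s k * E k \<le> E k" by simp
    then have "(1/2) * (norm (x (Suc k) - s k))\<^sup>2 \<le> E k" using inex[of k] unfolding E_def by (rule order_trans[rotated])
    then have "(norm (x (Suc k) - s k))\<^sup>2 \<le> 2 * E k" by linarith
    then show ?thesis unfolding R_def by (rule real_le_rsqrt)
  qed
  have nv: "norm (v k) \<le> (2 / \<sigma>) * R k" for k
  proof -
    have eq: "\<sigma>s k *\<^sub>R v k = (x k - s k) - (x (Suc k) - s k)" using xs[of k] by simp
    have n: "norm (\<sigma>s k *\<^sub>R v k) = \<sigma>s k * norm (v k)" using sig[of k] by simp
    have t: "norm ((x k - s k) - (x (Suc k) - s k)) \<le> norm (x k - s k) + norm (x (Suc k) - s k)"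
      by (rule norm_triangle_ineq4)
    have m: "\<sigma> * norm (v k) \<le> \<sigma>s k * norm (v k)" using sigma[of k] by (intro mult_right_mono) auto
    have n': "\<sigma>s k * norm (v k) \<le> norm (x k - s k) + norm (x (Suc k) - s k)"
      using t unfolding eq[symmetric] n .
    have "\<sigma> * norm (v k) \<le> 2 * R k" using n' m n1[of k] n2[of k] by linarith
    then have "norm (v k) \<le> 2 * R k / \<sigma>" using sigma_pos by (simp add: pos_le_divide_eq mult.commute)
    then show ?thesis by simp
  qed
  have vL: "v \<longlonglongrightarrow> 0"
  proof -
    have "(\<lambda>k. (2 / \<sigma>) * R k) \<longlonglongrightarrow> (2 / \<sigma>) * 0" by (intro tendsto_intros RL)
    then have "(\<lambda>k. (2 / \<sigma>) * R k) \<longlonglongrightarrow> 0" by simp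
    then show ?thesis by (rule Lim_null_comparison[OF always_eventually, rotated]) (use nv in blast)
  qed
  define K where "K = sqrt (2 * V 0) + sqrt (2 * (V 0 / (1 - \<rho>)))"
  have sK: "norm (s k - xstar) \<le> K" for k
  proof -
    have "(1/2) * (norm (x k - xstar))\<^sup>2 \<le> V 0" using Vle0[of k] Dst_nn[of k] by (simp add: V_def)
    then have "(norm (x k - xstar))\<^sup>2 \<le> 2 * V 0" by simp
    then have a: "norm (x k - xstar) \<le> sqrt (2 * V 0)" by (rule real_le_rsqrt)
    have "2 * E k \<le> 2 * (V 0 / (1 - \<rho>))" using Ek[of k] by simp
    then have "R k \<le> sqrt (2 * (V 0 / (1 - \<rho>)))" unfolding R_def by (rule real_sqrt_le_mono)
    then have b: "norm (s k - x k) \<le> sqrt (2 * (V 0 / (1 - \<rho>)))"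
      using n1[of k] by (simp add: norm_minus_commute)
    have "s k - xstar = (s k - x k) + (x k - xstar)" by simp
    then have "norm (s k - xstar) \<le> norm (s k - x k) + norm (x k - xstar)" by (metis norm_triangle_ineq)
    then show ?thesis using a b by (simp add: K_def)
  qed
  have ins1: "(\<lambda>k. inner (v k) (s k - xstar)) \<longlonglongrightarrow> 0"
  proof (rule Lim_null_comparison[OF always_eventually])
    show "\<forall>k. norm (inner (v k) (s k - xstar)) \<le> K * norm (v k)"
    proof
      fix k
      have "\<bar>inner (v k) (s k - xstar)\<bar> \<le> norm (v k) * norm (s k - xstar)" by (rule Cauchy_Schwarz_ineq2)
      also have "\<dots> \<le> norm (v k) * K" using sK[of k] by (intro mult_left_mono) auto
      finally show "norm (inner (v k) (s k - xstar)) \<le> K * norm (v k)" by (simp add: mult.commute)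
    qed
    show "(\<lambda>k. K * norm (v k)) \<longlonglongrightarrow> 0" using tendsto_mult[OF tendsto_const tendsto_norm[OF vL], of K] by simp
  qed
  have ins2: "(\<lambda>k. inner (s k) (v k)) \<longlonglongrightarrow> 0"
  proof -
    have "(\<lambda>k. inner (v k) (s k - xstar) + inner (v k) xstar) \<longlonglongrightarrow> 0 + inner 0 xstar"
      by (intro tendsto_intros ins1 vL)
    then show ?thesis by (simp add: inner_diff_right inner_commute)
  qed
  have TL: "T \<longlonglongrightarrow> 0"
  proof (rule Lim_null_comparison[OF always_eventually])
    show "\<forall>k. norm (T k) \<le> (V k - V (Suc k)) / \<sigma>"
    proof
      fix k
      have "\<sigma> * T k \<le> \<sigma>s k * T k" using sigma[of k] T_nn[of k] by (intro mult_right_mono) auto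
      then have "\<sigma> * T k \<le> V k - V (Suc k)" using Tle[of k] by simp
      then show "norm (T k) \<le> (V k - V (Suc k)) / \<sigma>" using T_nn[of k] sigma_pos by (simp add: pos_le_divide_eq mult.commute)
    qed
    have "(\<lambda>k. (V k - V (Suc k)) / \<sigma>) \<longlonglongrightarrow> (L - L) / \<sigma>" by (intro tendsto_intros VL LIMSEQ_Suc[OF VL]) (use sigma_pos in simp)
    then show "(\<lambda>k. (V k - V (Suc k)) / \<sigma>) \<longlonglongrightarrow> 0" by simp
  qed
  have ins3: "(\<lambda>k. inner (u k) (y (Suc k) - ystar)) \<longlonglongrightarrow> 0"
  proof -
    have "(\<lambda>k. T k - inner (v k) (s k - xstar)) \<longlonglongrightarrow> 0 - 0" by (intro tendsto_intros TL ins1)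
    then show ?thesis by (simp add: T_def)
  qed
  obtain r0 where F0: "Fstar f g A b 0 ystar = ereal r0"
    and low: "\<And>v' y'. ereal (r0 + inner xstar v') \<le> Fstar f g A b v' y'"
    using F_lower[OF f g sol] by blast
  have up: "Fstar f g A b (v k) (y (Suc k)) \<le> ereal (r0 + inner (s k) (v k) + inner (u k) (y (Suc k) - ystar))" for k
    by (rule F_upper[OF f g sol F0 vu])
  define cr where "cr k = real_of_ereal (Fstar f g A b (v k) (y (Suc k)))" for k
  have cfin: "Fstar f g A b (v k) (y (Suc k)) = ereal (cr k)" for k
    using low[of "v k" "y (Suc k)"] up[of k] unfolding cr_def
    by (cases "Fstar f g A b (v k) (y (Suc k))") auto
  have crb: "r0 + inner xstar (v k) \<le> cr k" "cr k \<le> r0 + inner (s k) (v k) + inner (u k) (y (Suc k) - ystar)" for k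
    using low[of "v k" "y (Suc k)"] up[of k] cfin[of k] by auto
  have crL: "cr \<longlonglongrightarrow> r0"
  proof (rule real_tendsto_sandwich[OF always_eventually always_eventually])
    show "\<forall>k. r0 + inner xstar (v k) \<le> cr k" using crb by blast
    show "\<forall>k. cr k \<le> r0 + inner (s k) (v k) + inner (u k) (y (Suc k) - ystar)" using crb by blast
    have "(\<lambda>k. r0 + inner xstar (v k)) \<longlonglongrightarrow> r0 + inner xstar 0" by (intro tendsto_intros vL)
    then show "(\<lambda>k. r0 + inner xstar (v k)) \<longlonglongrightarrow> r0" by simp
    have "(\<lambda>k. r0 + inner (s k) (v k) + inner (u k) (y (Suc k) - ystar)) \<longlonglongrightarrow> r0 + 0 + 0"
      by (intro tendsto_intros ins2 ins3)
    then show "(\<lambda>k. r0 + inner (s k) (v k) + inner (u k) (y (Suc k) - ystar)) \<longlonglongrightarrow> r0" by simp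
  qed
  have conj1: "(\<lambda>k. Fstar f g A b (v k) (y (Suc k))) \<longlonglongrightarrow> Fstar f g A b 0 ystar"
    unfolding cfin F0 using crL by (simp add: lim_ereal)
  have conj2: "yinf \<in> argmin_set (Fstar f g A b 0)"
    if "strict_mono r" "(\<lambda>k. y (Suc (r k))) \<longlonglongrightarrow> yinf" for r yinf
  proof -
    have vr: "(\<lambda>k. v (r k)) \<longlonglongrightarrow> 0" using LIMSEQ_subseq_LIMSEQ[OF vL that(1)] by (simp add: o_def)
    have cr': "(\<lambda>k. cr (r k)) \<longlonglongrightarrow> r0" using LIMSEQ_subseq_LIMSEQ[OF crL that(1)] by (simp add: o_def)
    have le: "Fstar f g A b 0 yinf \<le> ereal r0"
      by (rule F_lsc[OF Pf Pg vr that(2) _ cr']) (rule cfin)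
    show ?thesis unfolding argmin_set_def
    proof (clarify)
      fix z
      show "Fstar f g A b 0 yinf \<le> Fstar f g A b 0 z" using le low[of 0 z] by simp
    qed
  qed
  show ?thesis using conj1 conj2 by blast
qed

end
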